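(* Let $A$ be a $3\times 3$ skew-symmetric integer matrix. Then $A$ passes the algorithm described in the context if and only if $A$ is mutation-cyclic.
   Context: Notation: $S(p,q,r)=\begin{pmatrix}0&-p&-r\\ p&0&-q\\ r&q&0\end{pmatrix}$ for integers $p,q,r$. Matrix mutation: $\mu_k(B)=(b'_{ij})$ with $b'_{ij}=-b_{ij}$ if $i=k$ or $j=k$, and $b'_{ij}=b_{ij}+\operatorname{sgn}(b_{ik})\max(b_{ik}b_{kj},0)$ otherwise. A column is sign-coherent if all its nonzero entries have the same sign. A $3\times3$ skew-symmetric matrix is acyclic if its quiver ($b_{ij}$ arrows $i\to j$ when $b_{ij}>0$) has no oriented cycle (equivalently, it has a sign-coherent column), and cyclic otherwise; it is mutation-cyclic if every matrix in its mutation class is cyclic. $B,C$ are essentially equivalent if for some permutation $\sigma$ of $\{1,2,3\}$, $C_{ij}=B_{\sigma(i)\sigma(j)}$ for all $i,j$ or $C_{ij}=-B_{\sigma(i)\sigma(j)}$ for all $i,j$. The standard form of $B$ is the first matrix in the list $S(-a,-b,c),S(-a,b,c),S(a,-b,c),S(a,b,c)$ ($a\ge b\ge c\ge0$) essentially equivalent to $B$. Algorithm: replace the input by its standard form, written $S(-a,-b,c)$ with $|a|\ge|b|\ge|c|\ge0$, and set $A_1$ equal to it. Step 1: if $a\ge b\ge c\ge 2$ and $bc-a\ge b$, the input passes; otherwise, if some column is sign-coherent or $c\le 2$, it fails. Step 2 (for the current $A_i$): if some matrix essentially equivalent to $\mu_3(A_i)$ has the form $S(-d,-e,f)$ with $d\ge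 e\ge f\ge 2$, let $A_{i+1}$ be such a matrix; otherwise the input fails. Then: if $f\ge 3$ and $ef-d\ge e$, it passes; if $f=2$ it passes if $d=e$ and fails if $d>e$; otherwise increase $i$ by one and repeat Step 2. *)

theory Defs
  imports Main
begin

text \<open>A 3x3 integer matrix is represented as a function nat => nat => int,
  indices 1,2,3, with all entries outside {1,2,3} x {1,2,3} equal to 0.\<close>

type_synonym mat3 = "nat \<Rightarrow> nat \<Rightarrow> int"

definition idx3 :: "nat set" where "idx3 = {1,2,3}"

definition skew3 :: "mat3 \<Rightarrow> bool" where
  "skew3 B \<longleftrightarrow> (\<forall>i j. B i j = - B j i) \<and> (\<forall>i j. (i \<notin> idx3 \<or> j \<notin> idx3) \<longrightarrow> B i j = 0)"

definition S :: "int \<Rightarrow> int \<Rightarrow> int \<Rightarrow> mat3" where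
  "S p q r = (\<lambda>i j.
     if i = 1 \<and> j = 2 then - p else
     if i = 1 \<and> j = 3 then - r else
     if i = 2 \<and> j = 1 then p else
     if i = 2 \<and> j = 3 then - q else
     if i = 3 \<and> j = 1 then r else
     if i = 3 \<and> j = 2 then q else 0)"

definition mu :: "nat \<Rightarrow> mat3 \<Rightarrow> mat3" where
  "mu k B = (\<lambda>i j. if i = k \<or> j = k then - B i j
                   else B i j + sgn (B i k) * max (B i k * B k j) 0)"

definition sign_coherent_col :: "mat3 \<Rightarrow> nat \<Rightarrow> bool" where
  "sign_coherent_col B j \<longleftrightarrow> (\<forall>i\<in>idx3. B i j \<ge> 0) \<or> (\<forall>i\<in>idx3. B i j \<le> 0)"

definition quiver_rel :: "mat3 \<Rightarrow> (nat \<times> nat) set" where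
  "quiver_rel B = {(i, j). i \<in> idx3 \<and> j \<in> idx3 \<and> B i j > 0}"

definition acyclic_mat :: "mat3 \<Rightarrow> bool" where
  "acyclic_mat B \<longleftrightarrow> acyclic (quiver_rel B)"

definition cyclic_mat :: "mat3 \<Rightarrow> bool" where
  "cyclic_mat B \<longleftrightarrow> \<not> acyclic_mat B"

definition mutation_step :: "mat3 \<Rightarrow> mat3 \<Rightarrow> bool" where
  "mutation_step B C \<longleftrightarrow> (\<exists>k\<in>idx3. C = mu k B)"

definition mutation_cyclic :: "mat3 \<Rightarrow> bool" where
  "mutation_cyclic B \<longleftrightarrow> (\<forall>C. mutation_step\<^sup>*\<^sup>* B C \<longrightarrow> cyclic_mat C)"

definition ess_equiv :: "mat3 \<Rightarrow> mat3 \<Rightarrow> bool" where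
  "ess_equiv B C \<longleftrightarrow> (\<exists>\<sigma>. bij_betw \<sigma> idx3 idx3 \<and>
      ((\<forall>i\<in>idx3. \<forall>j\<in>idx3. C i j = B (\<sigma> i) (\<sigma> j)) \<or>
       (\<forall>i\<in>idx3. \<forall>j\<in>idx3. C i j = - B (\<sigma> i) (\<sigma> j))))"

text \<open>The four candidate forms, in the order of the list
  S(-a,-b,c), S(-a,b,c), S(a,-b,c), S(a,b,c).\<close>
fun form :: "nat \<Rightarrow> int \<Rightarrow> int \<Rightarrow> int \<Rightarrow> mat3" where
  "form 0 a b c = S (-a) (-b) c"
| "form (Suc 0) a b c = S (-a) b c"
| "form (Suc (Suc 0)) a b c = S a (-b) c"
| "form _ a b c = S a b c"

definition has_form :: "mat3 \<Rightarrow> nat \<Rightarrow> bool" where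
  "has_form B t \<longleftrightarrow> (\<exists>a b c. a \<ge> b \<and> b \<ge> c \<and> c \<ge> 0 \<and> ess_equiv B (form t a b c))"

definition std_form :: "mat3 \<Rightarrow> mat3" where
  "std_form B = (SOME M. \<exists>t a b c. t < 4 \<and> a \<ge> b \<and> b \<ge> c \<and> c \<ge> 0 \<and>
       M = form t a b c \<and> ess_equiv B M \<and> (\<forall>t'<t. \<not> has_form B t'))"

text \<open>Step 2 of the algorithm, iterated; the input passes iff the iteration
  terminates with "pass" after finitely many steps.\<close>
inductive step2_passes :: "mat3 \<Rightarrow> bool" where
  "\<lbrakk> d \<ge> e; e \<ge> f; f \<ge> 2; ess_equiv (mu 3 M) (S (-d) (-e) f);
     (f \<ge> 3 \<and> e * f - d \<ge> e) \<or> (f = 2 \<and> d = e) \<or>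
     (f \<ge> 3 \<and> e * f - d < e \<and> step2_passes (S (-d) (-e) f)) \<rbrakk>
   \<Longrightarrow> step2_passes M"

text \<open>The standard form is written S(-a,-b,c); then a = M 1 2, b = M 2 3, c = M 3 1.\<close>
definition passes :: "mat3 \<Rightarrow> bool" where
  "passes A \<longleftrightarrow> (let M = std_form A; a = M 1 2; b = M 2 3; c = M 3 1 in
     (a \<ge> b \<and> b \<ge> c \<and> c \<ge> 2 \<and> b * c - a \<ge> b) \<or>
     (\<not> (\<exists>j\<in>idx3. sign_coherent_col M j) \<and> \<not> c \<le> 2 \<and> step2_passes M))"

end

theory Submission
  imports Defs
begin


definition Tm :: "int \<Rightarrow> int \<Rightarrow> int \<Rightarrow> mat3" where "Tm x y z = S (-x) (-y) z"

lemma Tm_simps[simp]: "Tm x y z 1 2 = x" "Tm x y z 2 3 = y" "Tm x y z 3 1 = z"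
  "Tm x y z 2 1 = -x" "Tm x y z 3 2 = -y" "Tm x y z 1 3 = -z"
  "Tm x y z 1 1 = 0" "Tm x y z 2 2 = 0" "Tm x y z 3 3 = 0"
  by (simp_all add: Tm_def S_def)

lemma Tm_simps1[simp]: "Tm x y z (Suc 0) 2 = x" "Tm x y z 3 (Suc 0) = z"
  "Tm x y z 2 (Suc 0) = -x" "Tm x y z (Suc 0) 3 = -z" "Tm x y z (Suc 0) (Suc 0) = 0"
  by (simp_all add: Tm_def S_def)

lemma Tm_out: "i \<notin> idx3 \<or> j \<notin> idx3 \<Longrightarrow> Tm x y z i j = 0"
  by (auto simp: Tm_def S_def idx3_def)

lemma Tm_out1: "i \<notin> {1,2,3} \<Longrightarrow> Tm x y z i j = 0" "j \<notin> {1,2,3} \<Longrightarrow> Tm x y z i j = 0"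
  using Tm_out[of i j] by (auto simp: idx3_def)

lemma skew3_Tm: "skew3 (Tm x y z)"
  unfolding skew3_def
proof (intro conjI allI impI)
  fix i j :: nat
  show "Tm x y z i j = - Tm x y z j i"
  proof (cases "i \<in> {1,2,3} \<and> j \<in> {1,2,3}")
    case True thus ?thesis by auto
  next
    case False thus ?thesis using Tm_out[of i j] Tm_out[of j i] by (auto simp: idx3_def)
  qed
next
  fix i j :: nat assume "i \<notin> idx3 \<or> j \<notin> idx3" thus "Tm x y z i j = 0" by (rule Tm_out)
qed

lemma skew_Tm: assumes "skew3 B" shows "B = Tm (B 1 2) (B 2 3) (B 3 1)"
proof (intro ext)
  fix i j
  have sk: "\<And>i j. B i j = - B j i" and out: "\<And>i j. i \<notin> idx3 \<or> j \<notin> idx3 \<Longrightarrow> B i j = 0"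
    using assms unfolding skew3_def by blast+
  have d: "B k k = 0" for k using sk[of k k] by linarith
  show "B i j = Tm (B 1 2) (B 2 3) (B 3 1) i j"
  proof (cases "i \<in> idx3 \<and> j \<in> idx3")
    case True then have "i \<in> {1,2,3}" "j \<in> {1,2,3}" by (auto simp: idx3_def)
    have e: "B 2 1 = - B 1 2" "B 3 2 = - B 2 3" "B 1 3 = - B 3 1" using sk[of 2 1] sk[of 3 2] sk[of 1 3] by linarith+
    have e1: "B 2 (Suc 0) = - B (Suc 0) 2" "B (Suc 0) 3 = - B 3 (Suc 0)" using e by simp_all
    from True show ?thesis by (auto simp: e e1 d idx3_def)
  next
    case False
    then have h: "i \<notin> idx3 \<or> j \<notin> idx3" by blast
    show ?thesis using out[OF h] Tm_out[OF h] by simp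
  qed
qed

lemma sgnmax: "sgn (y::int) * max (y*z) 0 = sgn z * max (y*z) 0"
  by (cases y "0::int" rule: linorder_cases; cases z "0::int" rule: linorder_cases)
     (auto simp: max_def mult_le_0_iff zero_le_mult_iff)

lemma mu3_Tm: "mu 3 (Tm x y z) = Tm (x - sgn z * max (y*z) 0) (-y) (-z)"
proof (intro ext)
  fix i j :: nat
  have e: "sgn y * max (y*z) 0 = sgn z * max (y*z) 0" "sgn (-z) * max ((-z)*(-y)) 0 = - sgn z * max (y*z) 0"
    using sgnmax[of y z] by (simp_all add: mult.commute)
  show "mu 3 (Tm x y z) i j = Tm (x - sgn z * max (y*z) 0) (-y) (-z) i j"
  proof (cases "i \<in> {1,2,3} \<and> j \<in> {1,2,3}")
    case True
    then show ?thesis by (auto simp: mu_def e mult.commute[of z y] mult.commute[of y x] mult.commute[of z x])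
  next
    case False
    then show ?thesis by (auto simp: mu_def Tm_out1)
  qed
qed


lemma mu1_Tm: "mu 1 (Tm x y z) = Tm (-x) (y - sgn x * max (x*z) 0) (-z)"
proof (intro ext)
  fix i j :: nat
  have e: "sgn (-x) * max ((-x)*(-z)) 0 = - sgn x * max (x*z) 0" "sgn z * max (x*z) 0 = sgn x * max (x*z) 0"
    using sgnmax[of x z] sgnmax[of z x] sgnmax[of x y] sgnmax[of y x] by (simp_all add: mult.commute)
  show "mu 1 (Tm x y z) i j = Tm (-x) (y - sgn x * max (x*z) 0) (-z) i j"
  proof (cases "i \<in> {1,2,3} \<and> j \<in> {1,2,3}")
    case True
    then show ?thesis by (auto simp: mu_def e mult.commute[of z y] mult.commute[of y x] mult.commute[of z x])
  next
    case False
    then show ?thesis by (auto simp: mu_def Tm_out1)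
  qed
qed

lemma mu2_Tm: "mu 2 (Tm x y z) = Tm (-x) (-y) (z - sgn y * max (x*y) 0)"
proof (intro ext)
  fix i j :: nat
  have e: "sgn (-y) * max ((-y)*(-x)) 0 = - sgn y * max (x*y) 0" "sgn x * max (x*y) 0 = sgn y * max (x*y) 0"
    using sgnmax[of x z] sgnmax[of z x] sgnmax[of x y] sgnmax[of y x] by (simp_all add: mult.commute)
  show "mu 2 (Tm x y z) i j = Tm (-x) (-y) (z - sgn y * max (x*y) 0) i j"
  proof (cases "i \<in> {1,2,3} \<and> j \<in> {1,2,3}")
    case True
    then show ?thesis by (auto simp: mu_def e mult.commute[of z y] mult.commute[of y x] mult.commute[of z x])
  next
    case False
    then show ?thesis by (auto simp: mu_def Tm_out1)
  qed
qed


definition cyc3 :: "int \<Rightarrow> int \<Rightarrow> int \<Rightarrow> bool" where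
  "cyc3 x y z \<longleftrightarrow> (x > 0 \<and> y > 0 \<and> z > 0) \<or> (x < 0 \<and> y < 0 \<and> z < 0)"

lemma quiver_mem: "(i,j) \<in> quiver_rel B \<longleftrightarrow> i \<in> {1,2,3} \<and> j \<in> {1,2,3} \<and> B i j > 0"
  by (simp add: quiver_rel_def idx3_def)

lemma acyc_order: assumes "r \<subseteq> {(i,j). (f i::nat) < f j}" shows "acyclic r"
proof -
  have "{(i,j). (f i::nat) < f j} = inv_image less_than f" by (auto simp: inv_image_def)
  then have "wf {(i,j). (f i::nat) < f j}" by simp
  then have "acyclic {(i,j). (f i::nat) < f j}" by (rule wf_acyclic)
  then show ?thesis using assms acyclic_subset by blast
qed

definition ord3 :: "nat \<Rightarrow> nat \<Rightarrow> nat \<Rightarrow> nat \<Rightarrow> nat" where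
  "ord3 p q r = (\<lambda>i. if i = 1 then p else if i = 2 then q else r)"

lemma acyc_Tm: fixes f :: "nat \<Rightarrow> nat" assumes "\<And>i j. i \<in> {1,2,3} \<Longrightarrow> j \<in> {1,2,3} \<Longrightarrow> Tm x y z i j > 0 \<Longrightarrow> f i < f j"
  shows "acyclic (quiver_rel (Tm x y z))"
  by (rule acyc_order[where f=f]) (auto simp: quiver_mem assms)

lemma noncyc_cases: "\<not> cyc3 x y z \<Longrightarrow> (x\<ge>0 \<and> y\<ge>0 \<and> z\<le>0) \<or> (y\<ge>0 \<and> z\<ge>0 \<and> x\<le>0) \<or> (z\<ge>0 \<and> x\<ge>0 \<and> y\<le>0) \<or>
          (x\<le>0 \<and> y\<le>0 \<and> z\<ge>0) \<or> (y\<le>0 \<and> z\<le>0 \<and> x\<ge>0) \<or> (z\<le>0 \<and> x\<le>0 \<and> y\<ge>0)"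
  unfolding cyc3_def by (cases "x \<ge> 0"; cases "y \<ge> 0"; cases "z \<ge> 0") auto

lemma acyc1: "x\<ge>0 \<Longrightarrow> y\<ge>0 \<Longrightarrow> z\<le>0 \<Longrightarrow> acyclic (quiver_rel (Tm x y z))"
  by (rule acyc_Tm[where f="ord3 0 1 2"]) (auto simp: ord3_def)

lemma acyc2: "y\<ge>0 \<Longrightarrow> z\<ge>0 \<Longrightarrow> x\<le>0 \<Longrightarrow> acyclic (quiver_rel (Tm x y z))"
  by (rule acyc_Tm[where f="ord3 2 0 1"]) (auto simp: ord3_def)
lemma acyc3: "z\<ge>0 \<Longrightarrow> x\<ge>0 \<Longrightarrow> y\<le>0 \<Longrightarrow> acyclic (quiver_rel (Tm x y z))"
  by (rule acyc_Tm[where f="ord3 1 2 0"]) (auto simp: ord3_def)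
lemma acyc4: "x\<le>0 \<Longrightarrow> y\<le>0 \<Longrightarrow> z\<ge>0 \<Longrightarrow> acyclic (quiver_rel (Tm x y z))"
  by (rule acyc_Tm[where f="ord3 2 1 0"]) (auto simp: ord3_def)
lemma acyc5: "y\<le>0 \<Longrightarrow> z\<le>0 \<Longrightarrow> x\<ge>0 \<Longrightarrow> acyclic (quiver_rel (Tm x y z))"
  by (rule acyc_Tm[where f="ord3 0 2 1"]) (auto simp: ord3_def)
lemma acyc6: "z\<le>0 \<Longrightarrow> x\<le>0 \<Longrightarrow> y\<ge>0 \<Longrightarrow> acyclic (quiver_rel (Tm x y z))"
  by (rule acyc_Tm[where f="ord3 1 0 2"]) (auto simp: ord3_def)

lemma cyclic_Tm: "cyclic_mat (Tm x y z) \<longleftrightarrow> cyc3 x y z"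
proof
  assume c: "cyc3 x y z"
  let ?r = "quiver_rel (Tm x y z)"
  show "cyclic_mat (Tm x y z)"
  proof (cases "x > 0")
    case True
    with c have "y > 0" "z > 0" by (auto simp: cyc3_def)
    with True have a: "(1,2) \<in> ?r" and b: "(2,3) \<in> ?r" and d: "(3,1) \<in> ?r" by (simp_all add: quiver_mem)
    have "(1,1) \<in> ?r\<^sup>+" by (rule trancl_into_trancl[OF trancl_into_trancl[OF r_into_trancl[OF a] b] d])
    then show ?thesis unfolding cyclic_mat_def acyclic_mat_def acyclic_def by blast
  next
    case False
    with c have "x < 0" "y < 0" "z < 0" by (auto simp: cyc3_def)
    then have a: "(1,3) \<in> ?r" and b: "(3,2) \<in> ?r" and d: "(2,1) \<in> ?r" by (simp_all add: quiver_mem)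
    have "(1,1) \<in> ?r\<^sup>+" by (rule trancl_into_trancl[OF trancl_into_trancl[OF r_into_trancl[OF a] b] d])
    then show ?thesis unfolding cyclic_mat_def acyclic_mat_def acyclic_def by blast
  qed
next
  assume c: "cyclic_mat (Tm x y z)"
  show "cyc3 x y z"
  proof (rule ccontr)
    assume n: "\<not> cyc3 x y z"
    have "acyclic (quiver_rel (Tm x y z))"
      using noncyc_cases[OF n]
    proof (elim disjE conjE)
    qed (fact acyc1 acyc2 acyc3 acyc4 acyc5 acyc6)+
    with c show False by (simp add: cyclic_mat_def acyclic_mat_def)
  qed
qed

lemma sc_Tm: "sign_coherent_col (Tm x y z) 1 \<longleftrightarrow> (0 \<le> -x \<and> 0 \<le> z) \<or> (-x \<le> 0 \<and> z \<le> 0)"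
   "sign_coherent_col (Tm x y z) 2 \<longleftrightarrow> (0 \<le> x \<and> 0 \<le> -y) \<or> (x \<le> 0 \<and> -y \<le> 0)"
   "sign_coherent_col (Tm x y z) 3 \<longleftrightarrow> (0 \<le> -z \<and> 0 \<le> y) \<or> (-z \<le> 0 \<and> y \<le> 0)"
  by (simp_all add: sign_coherent_col_def idx3_def)

lemma nosc_Tm: "(\<not> (\<exists>j\<in>idx3. sign_coherent_col (Tm x y z) j)) \<longleftrightarrow> cyc3 x y z"
proof -
  have "(\<exists>j\<in>idx3. sign_coherent_col (Tm x y z) j) \<longleftrightarrow> sign_coherent_col (Tm x y z) 1 \<or>
     sign_coherent_col (Tm x y z) 2 \<or> sign_coherent_col (Tm x y z) 3" by (simp add: idx3_def)
  then show ?thesis unfolding sc_Tm cyc3_def by linarith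
qed



definition Cf :: "int \<Rightarrow> int \<Rightarrow> int \<Rightarrow> int" where "Cf a b c = a*a + b*b + c*c - a*b*c"

definition good3 :: "int \<Rightarrow> int \<Rightarrow> int \<Rightarrow> bool" where
  "good3 x y z \<longleftrightarrow> cyc3 x y z \<and> \<bar>x\<bar> \<ge> 2 \<and> \<bar>y\<bar> \<ge> 2 \<and> \<bar>z\<bar> \<ge> 2 \<and> Cf \<bar>x\<bar> \<bar>y\<bar> \<bar>z\<bar> \<le> 4"

lemma Cf_rot: "Cf a b c = Cf b c a" by (simp add: Cf_def algebra_simps)
lemma Cf_swap: "Cf a b c = Cf a c b" by (simp add: Cf_def algebra_simps)
lemma Cf_flip: "Cf (b*c - a) b c = Cf a b c" by (simp add: Cf_def algebra_simps)

lemma cyc3_rot: "cyc3 x y z = cyc3 y z x" by (auto simp: cyc3_def)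
lemma cyc3_swap: "cyc3 x y z = cyc3 x z y" by (auto simp: cyc3_def)
lemma cyc3_neg: "cyc3 (-x) (-y) (-z) = cyc3 x y z" by (auto simp: cyc3_def)
lemma good3_rot: "good3 x y z = good3 y z x" unfolding good3_def using cyc3_rot Cf_rot by metis
lemma good3_swap: "good3 x y z = good3 x z y" unfolding good3_def using cyc3_swap Cf_swap by metis
lemma good3_neg: "good3 (-x) (-y) (-z) = good3 x y z" unfolding good3_def using cyc3_neg by simp

lemma sq_ge4: "(b::int) \<ge> 2 \<Longrightarrow> b*b \<ge> 4"
proof -
  assume "b \<ge> 2" then have "b*b \<ge> 2*2" by (intro mult_mono) auto
  then show ?thesis by simp
qed

lemma A1: fixes a b c :: int assumes "a \<ge> 2" "b \<ge> 2" "c \<ge> 2" "Cf a b c \<le> 4" shows "b*c - a \<ge> 2"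
proof (rule ccontr)
  assume "\<not> b*c - a \<ge> 2"
  then have t: "b*c - a \<le> 1" by simp
  define t where "t = b*c - a"
  have "Cf t b c \<le> 4" using Cf_flip[of b c a] assms(4) t_def by simp
  then have C: "t*t + b*b + c*c - t*b*c \<le> 4" by (simp add: Cf_def)
  have bb: "b*b \<ge> 4" "c*c \<ge> 4" using sq_ge4 assms by auto
  have bc: "b*c \<ge> 4" using mult_mono[of 2 b 2 c] assms by simp
  show False
  proof (cases "t \<le> 0")
    case True
    have "t*(t - b*c) \<ge> 0" using True bc by (intro mult_nonpos_nonpos) auto
    then have "t*t - t*b*c \<ge> 0" by (simp add: algebra_simps)
    then show False using C bb by linarith
  next
    case False
    then have "t = 1" using t t_def by simp
    moreover have "(b-c)*(b-c) \<ge> 0" by simp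
    then have "b*b + c*c \<ge> 2*b*c" by (simp add: algebra_simps)
    ultimately show False using C bc by simp
  qed
qed

lemma A3: fixes a b c :: int assumes "a \<ge> b" "b \<ge> c" "c \<ge> 2" "b*c - a \<ge> b" shows "Cf a b c \<le> 4"
proof -
  have h1: "(a-b)*(b*c-a-b) \<ge> 0" using assms by (intro mult_nonneg_nonneg) auto
  have h2: "a*(b*c-a) \<ge> b*(b*c-b)" using h1 by (simp add: algebra_simps)
  have e: "Cf a b c = b*b + c*c - a*(b*c-a)" by (simp add: Cf_def algebra_simps)
  have e2: "b*(b*c-b) = b*b*(c-1)" by (simp add: algebra_simps)
  have h3: "b*b*(c-2) \<ge> c*c*(c-2)"
    using assms by (intro mult_right_mono mult_mono) auto
  have "Cf a b c \<le> c*c - b*b*(c-2)" using e h2 e2 by (simp add: algebra_simps)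
  also have "\<dots> \<le> c*c - c*c*(c-2)" using h3 by simp
  also have "\<dots> \<le> 4"
  proof (cases "c = 2")
    case False
    then have "c - 3 \<ge> 0" using assms by simp
    then have "c*c*(c-3) \<ge> 0" by simp
    then show ?thesis by (simp add: algebra_simps)
  qed simp
  finally show ?thesis .
qed

lemma A3': fixes a b c :: int assumes "a \<ge> b" "a \<ge> c" "b \<ge> 2" "c \<ge> 2" "b*c \<ge> 2*a" shows "Cf a b c \<le> 4"
proof (cases "b \<ge> c")
  case True then show ?thesis using A3[of b a c] assms by simp
next
  case False
  then have "Cf a c b \<le> 4" using A3[of c a b] assms by (simp add: mult.commute)
  then show ?thesis using Cf_swap by simp
qed


lemma good_pos_core: fixes a b c :: int assumes "a\<ge>2" "b\<ge>2" "c\<ge>2" "Cf a b c \<le> 4"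
  shows "good3 (b*c - a) b c" "good3 (-(b*c-a)) (-b) (-c)"
proof -
  have h: "b*c - a \<ge> 2" using A1 assms by blast
  have "Cf (b*c-a) b c \<le> 4" using Cf_flip[of b c a] assms by simp
  then show g: "good3 (b*c - a) b c" using h assms by (simp add: good3_def cyc3_def)
  then show "good3 (-(b*c-a)) (-b) (-c)" using good3_neg[of "b*c-a" b c] by simp
qed

lemma good_mu3: assumes g: "good3 x y z" shows "good3 (x - sgn z * max (y*z) 0) (-y) (-z)"
proof -
  have c: "cyc3 x y z" and ab: "\<bar>x\<bar> \<ge> 2" "\<bar>y\<bar> \<ge> 2" "\<bar>z\<bar> \<ge> 2" and C: "Cf \<bar>x\<bar> \<bar>y\<bar> \<bar>z\<bar> \<le> 4"
    using g by (auto simp: good3_def)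
  show ?thesis
  proof (cases "x > 0")
    case True
    with c have p: "y > 0" "z > 0" by (auto simp: cyc3_def)
    then have "y*z > 0" by simp
    then have e: "x - sgn z * max (y*z) 0 = -(y*z - x)" using p by simp
    show ?thesis unfolding e using good_pos_core(2)[of x y z] ab C True p by simp
  next
    case False
    with c have p: "x < 0" "y < 0" "z < 0" by (auto simp: cyc3_def)
    then have "y*z > 0" by (simp add: mult_neg_neg)
    then have e: "x - sgn z * max (y*z) 0 = (-y)*(-z) - (-x)" using p by simp
    show ?thesis unfolding e using good_pos_core(1)[of "-x" "-y" "-z"] ab C p by simp
  qed
qed

lemma good_mu1: assumes g: "good3 x y z" shows "good3 (-x) (y - sgn x * max (x*z) 0) (-z)"
proof -
  have "good3 y z x" using g good3_rot by metis
  from good_mu3[OF this] have "good3 (y - sgn x * max (z*x) 0) (-z) (-x)" .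
  then show ?thesis using good3_rot by (metis mult.commute)
qed

lemma good_mu2: assumes g: "good3 x y z" shows "good3 (-x) (-y) (z - sgn y * max (x*y) 0)"
proof -
  have "good3 z x y" using g good3_rot by metis
  from good_mu3[OF this] have "good3 (z - sgn y * max (x*y) 0) (-x) (-y)" .
  then show ?thesis using good3_rot by metis
qed

lemma mc_good: assumes g: "good3 x y z" shows "mutation_cyclic (Tm x y z)"
  unfolding mutation_cyclic_def
proof (intro allI impI)
  fix C assume "mutation_step\<^sup>*\<^sup>* (Tm x y z) C"
  then have "\<exists>x' y' z'. C = Tm x' y' z' \<and> good3 x' y' z'"
  proof (induction rule: rtranclp_induct)
    case base then show ?case using g by blast
  next
    case (step B C)
    then obtain x' y' z' where B: "B = Tm x' y' z'" and gb: "good3 x' y' z'" by blast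
    from step(2) obtain k where k: "k \<in> {1,2,3}" "C = mu k B" by (auto simp: mutation_step_def idx3_def)
    from k(1) consider "k=1" | "k=2" | "k=3" by auto
    then show ?case
    proof cases
      case 1
      then have "C = Tm (-x') (y' - sgn x' * max (x'*z') 0) (-z')" using k(2) B mu1_Tm by simp
      then show ?thesis using good_mu1[OF gb] by blast
    next
      case 2
      then have "C = Tm (-x') (-y') (z' - sgn y' * max (x'*y') 0)" using k(2) B mu2_Tm by simp
      then show ?thesis using good_mu2[OF gb] by blast
    next
      case 3
      then have "C = Tm (x' - sgn z' * max (y'*z') 0) (-y') (-z')" using k(2) B mu3_Tm by simp
      then show ?thesis using good_mu3[OF gb] by blast
    qed
  qed
  then show "cyclic_mat C" using cyclic_Tm good3_def by auto
qed


lemma Dpos: fixes a b c :: int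
  assumes "a>0" "b>0" "c>0" "a\<ge>b" "a\<ge>c" "\<not>(a\<ge>2 \<and> b\<ge>2 \<and> c\<ge>2 \<and> Cf a b c \<le> 4)" "b*c > a"
  shows "b*c - a < a \<and> \<not>(b*c-a \<ge> 2 \<and> b\<ge>2 \<and> c\<ge>2 \<and> Cf (b*c-a) b c \<le> 4)"
proof -
  have b2: "b \<ge> 2"
  proof (rule ccontr)
    assume "\<not> b \<ge> 2" then have "b = 1" using assms by simp
    then show False using assms by simp
  qed
  have c2: "c \<ge> 2"
  proof (rule ccontr)
    assume "\<not> c \<ge> 2" then have "c = 1" using assms by simp
    then show False using assms by simp
  qed
  have a2: "a \<ge> 2" using b2 assms by simp
  have C: "Cf a b c > 4" using assms a2 b2 c2 by auto
  have "b*c - a < a"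
  proof (rule ccontr)
    assume "\<not> b*c - a < a"
    then have "b*c \<ge> 2*a" by simp
    then have "Cf a b c \<le> 4" using A3'[of b a c] assms b2 c2 by simp
    then show False using C by simp
  qed
  moreover have "Cf (b*c-a) b c > 4" using C Cf_flip[of b c a] by simp
  ultimately show ?thesis by simp
qed

lemma D: assumes c: "cyc3 x y z" and ng: "\<not> good3 x y z" and m: "\<bar>x\<bar> \<ge> \<bar>y\<bar>" "\<bar>x\<bar> \<ge> \<bar>z\<bar>"
  shows "\<not> cyc3 (x - sgn z * max (y*z) 0) (-y) (-z) \<or>
    (\<not> good3 (x - sgn z * max (y*z) 0) (-y) (-z) \<and> \<bar>x - sgn z * max (y*z) 0\<bar> < \<bar>x\<bar>)"
proof (cases "x > 0")
  case True
  with c have p: "y > 0" "z > 0" by (auto simp: cyc3_def)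
  then have "y*z > 0" by simp
  then have e: "x - sgn z * max (y*z) 0 = x - y*z" using p by simp
  show ?thesis
  proof (cases "y*z \<le> x")
    case True then show ?thesis unfolding e using p by (simp add: cyc3_def)
  next
    case False
    have ng': "\<not>(x\<ge>2 \<and> y\<ge>2 \<and> z\<ge>2 \<and> Cf x y z \<le> 4)" using ng c \<open>x>0\<close> p by (simp add: good3_def)
    have "y*z - x < x \<and> \<not>(y*z-x \<ge> 2 \<and> y\<ge>2 \<and> z\<ge>2 \<and> Cf (y*z-x) y z \<le> 4)"
      using Dpos[of x y z] \<open>x>0\<close> p m False ng' by simp
    then show ?thesis unfolding e using p False \<open>x>0\<close> by (auto simp: good3_def)
  qed
next
  case False
  with c have p: "x < 0" "y < 0" "z < 0" by (auto simp: cyc3_def)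
  then have "y*z > 0" by (simp add: mult_neg_neg)
  then have e: "x - sgn z * max (y*z) 0 = (-y)*(-z) - (-x)" using p by simp
  show ?thesis
  proof (cases "(-y)*(-z) \<le> -x")
    case True then show ?thesis unfolding e using p by (simp add: cyc3_def)
  next
    case False
    have ng': "\<not>(-x\<ge>2 \<and> -y\<ge>2 \<and> -z\<ge>2 \<and> Cf (-x) (-y) (-z) \<le> 4)" using ng c p by (simp add: good3_def)
    have "(-y)*(-z) - (-x) < -x \<and> \<not>((-y)*(-z)-(-x) \<ge> 2 \<and> -y\<ge>2 \<and> -z\<ge>2 \<and> Cf ((-y)*(-z)-(-x)) (-y) (-z) \<le> 4)"
      using Dpos[of "-x" "-y" "-z"] p m False ng' by simp
    then show ?thesis unfolding e using p False by (auto simp: good3_def)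
  qed
qed


lemma esc_step:
  assumes st: "mutation_step B B'" and B': "B' = Tm p q r"
    and o: "\<not> cyc3 p q r \<or> (\<not> good3 p q r \<and> nat (\<bar>p\<bar>+\<bar>q\<bar>+\<bar>r\<bar>) < n)"
    and IH: "\<And>p q r. nat (\<bar>p\<bar>+\<bar>q\<bar>+\<bar>r\<bar>) < n \<Longrightarrow> \<not> good3 p q r \<Longrightarrow>
        \<exists>C. mutation_step\<^sup>*\<^sup>* (Tm p q r) C \<and> \<not> cyclic_mat C"
  shows "\<exists>C. mutation_step\<^sup>*\<^sup>* B C \<and> \<not> cyclic_mat C"
  using o
proof
  assume "\<not> cyc3 p q r"
  then have "\<not> cyclic_mat B'" using B' cyclic_Tm by simp
  moreover have "mutation_step\<^sup>*\<^sup>* B B'" using st by simp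
  ultimately show ?thesis by blast
next
  assume "\<not> good3 p q r \<and> nat (\<bar>p\<bar>+\<bar>q\<bar>+\<bar>r\<bar>) < n"
  then obtain C where "mutation_step\<^sup>*\<^sup>* B' C" "\<not> cyclic_mat C" using IH B' by blast
  then show ?thesis using st by (meson converse_rtranclp_into_rtranclp)
qed

lemma escape: "\<not> good3 x y z \<Longrightarrow> \<exists>C. mutation_step\<^sup>*\<^sup>* (Tm x y z) C \<and> \<not> cyclic_mat C"
proof (induction "nat (\<bar>x\<bar>+\<bar>y\<bar>+\<bar>z\<bar>)" arbitrary: x y z rule: less_induct)
  case less
  note IH = less.hyps
  show ?case
  proof (cases "cyc3 x y z")
    case False then show ?thesis using cyclic_Tm by blast
  next
    case True
    consider (X) "\<bar>x\<bar>\<ge>\<bar>y\<bar>" "\<bar>x\<bar>\<ge>\<bar>z\<bar>" | (Y) "\<bar>y\<bar>\<ge>\<bar>x\<bar>" "\<bar>y\<bar>\<ge>\<bar>z\<bar>"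
      | (Z) "\<bar>z\<bar>\<ge>\<bar>x\<bar>" "\<bar>z\<bar>\<ge>\<bar>y\<bar>" by linarith
    then show ?thesis
    proof cases
      case X
      let ?X = "x - sgn z * max (y*z) 0"
      have st: "mutation_step (Tm x y z) (Tm ?X (-y) (-z))"
        unfolding mutation_step_def idx3_def using mu3_Tm by auto
      have o: "\<not> cyc3 ?X (-y) (-z) \<or> (\<not> good3 ?X (-y) (-z) \<and> \<bar>?X\<bar> < \<bar>x\<bar>)"
        using D[OF True less.prems X] .
      show ?thesis
      proof (rule esc_step[OF st refl, where n="nat (\<bar>x\<bar>+\<bar>y\<bar>+\<bar>z\<bar>)"])
        fix p q r assume "nat (\<bar>p\<bar>+\<bar>q\<bar>+\<bar>r\<bar>) < nat (\<bar>x\<bar>+\<bar>y\<bar>+\<bar>z\<bar>)" "\<not> good3 p q r"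
        then show "\<exists>C. mutation_step\<^sup>*\<^sup>* (Tm p q r) C \<and> \<not> cyclic_mat C" using IH by blast
      qed (use o in auto)
    next
      case Y
      let ?Y = "y - sgn x * max (x*z) 0"
      have st: "mutation_step (Tm x y z) (Tm (-x) ?Y (-z))"
        unfolding mutation_step_def idx3_def using mu1_Tm by auto
      have c': "cyc3 y z x" using True cyc3_rot by metis
      have g': "\<not> good3 y z x" using less.prems good3_rot by metis
      have o: "\<not> cyc3 ?Y (-z) (-x) \<or> (\<not> good3 ?Y (-z) (-x) \<and> \<bar>?Y\<bar> < \<bar>y\<bar>)"
        using D[OF c' g'] Y by (simp add: mult.commute)
      have o': "\<not> cyc3 (-x) ?Y (-z) \<or> (\<not> good3 (-x) ?Y (-z) \<and> \<bar>?Y\<bar> < \<bar>y\<bar>)"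
        using o cyc3_rot[of "-x" ?Y "-z"] good3_rot[of "-x" ?Y "-z"] by simp
      show ?thesis
      proof (rule esc_step[OF st refl, where n="nat (\<bar>x\<bar>+\<bar>y\<bar>+\<bar>z\<bar>)"])
        fix p q r assume "nat (\<bar>p\<bar>+\<bar>q\<bar>+\<bar>r\<bar>) < nat (\<bar>x\<bar>+\<bar>y\<bar>+\<bar>z\<bar>)" "\<not> good3 p q r"
        then show "\<exists>C. mutation_step\<^sup>*\<^sup>* (Tm p q r) C \<and> \<not> cyclic_mat C" using IH by blast
      qed (use o' in auto)
    next
      case Z
      let ?Z = "z - sgn y * max (x*y) 0"
      have st: "mutation_step (Tm x y z) (Tm (-x) (-y) ?Z)"
        unfolding mutation_step_def idx3_def using mu2_Tm by auto
      have c': "cyc3 z x y" using True cyc3_rot by metis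
      have g': "\<not> good3 z x y" using less.prems good3_rot by metis
      have o: "\<not> cyc3 ?Z (-x) (-y) \<or> (\<not> good3 ?Z (-x) (-y) \<and> \<bar>?Z\<bar> < \<bar>z\<bar>)"
        using D[OF c' g'] Z by simp
      have o': "\<not> cyc3 (-x) (-y) ?Z \<or> (\<not> good3 (-x) (-y) ?Z \<and> \<bar>?Z\<bar> < \<bar>z\<bar>)"
        using o cyc3_rot[of "-x" "-y" ?Z] good3_rot[of "-x" "-y" ?Z] cyc3_rot[of "-y" ?Z "-x"] good3_rot[of "-y" ?Z "-x"] by simp
      show ?thesis
      proof (rule esc_step[OF st refl, where n="nat (\<bar>x\<bar>+\<bar>y\<bar>+\<bar>z\<bar>)"])
        fix p q r assume "nat (\<bar>p\<bar>+\<bar>q\<bar>+\<bar>r\<bar>) < nat (\<bar>x\<bar>+\<bar>y\<bar>+\<bar>z\<bar>)" "\<not> good3 p q r"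
        then show "\<exists>C. mutation_step\<^sup>*\<^sup>* (Tm p q r) C \<and> \<not> cyclic_mat C" using IH by blast
      qed (use o' in auto)
    qed
  qed
qed

lemma mc_iff: "mutation_cyclic (Tm x y z) \<longleftrightarrow> good3 x y z"
  using mc_good escape unfolding mutation_cyclic_def by blast




lemma ee_refl: "ess_equiv B B"
  unfolding ess_equiv_def by (intro exI[of _ id]) (auto simp: bij_betw_id)

lemma ee_trans: assumes "ess_equiv A B" "ess_equiv B C" shows "ess_equiv A C"
proof -
  obtain \<sigma> where s: "bij_betw \<sigma> idx3 idx3" and sB: "(\<forall>i\<in>idx3. \<forall>j\<in>idx3. B i j = A (\<sigma> i) (\<sigma> j)) \<or>
       (\<forall>i\<in>idx3. \<forall>j\<in>idx3. B i j = - A (\<sigma> i) (\<sigma> j))" using assms(1) unfolding ess_equiv_def by blast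
  obtain \<tau> where t: "bij_betw \<tau> idx3 idx3" and tC: "(\<forall>i\<in>idx3. \<forall>j\<in>idx3. C i j = B (\<tau> i) (\<tau> j)) \<or>
       (\<forall>i\<in>idx3. \<forall>j\<in>idx3. C i j = - B (\<tau> i) (\<tau> j))" using assms(2) unfolding ess_equiv_def by blast
  have b: "bij_betw (\<sigma> \<circ> \<tau>) idx3 idx3" using bij_betw_trans[OF t s] .
  have ti: "\<And>i. i \<in> idx3 \<Longrightarrow> \<tau> i \<in> idx3" using t bij_betw_apply by metis
  have "(\<forall>i\<in>idx3. \<forall>j\<in>idx3. C i j = A ((\<sigma>\<circ>\<tau>) i) ((\<sigma>\<circ>\<tau>) j)) \<or>
       (\<forall>i\<in>idx3. \<forall>j\<in>idx3. C i j = - A ((\<sigma>\<circ>\<tau>) i) ((\<sigma>\<circ>\<tau>) j))"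
    using sB tC ti by auto
  then show ?thesis unfolding ess_equiv_def using b by blast
qed

lemma bij_ord3: "{p,q,r} = idx3 \<Longrightarrow> p \<noteq> q \<Longrightarrow> q \<noteq> r \<Longrightarrow> p \<noteq> r \<Longrightarrow> bij_betw (ord3 p q r) idx3 idx3"
  unfolding bij_betw_def inj_on_def by (auto simp: ord3_def idx3_def)

lemma ee_rot: "ess_equiv (Tm x y z) (Tm y z x)"
  unfolding ess_equiv_def
  by (intro exI[of _ "ord3 2 3 1"] conjI bij_ord3 disjI1) (auto simp: ord3_def idx3_def)

lemma ee_swap: "ess_equiv (Tm x y z) (Tm x z y)"
  unfolding ess_equiv_def
  by (intro exI[of _ "ord3 2 1 3"] conjI bij_ord3 disjI2) (auto simp: ord3_def idx3_def)

lemma ee_neg: "ess_equiv (Tm x y z) (Tm (-x) (-y) (-z))"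
  unfolding ess_equiv_def
  by (intro exI[of _ "id"] conjI disjI2) (auto simp: idx3_def bij_betw_id)


lemma sort_exists0: "\<exists>p q r. ess_equiv (Tm x y z) (Tm p q r) \<and> \<bar>p\<bar> \<ge> \<bar>q\<bar> \<and> \<bar>q\<bar> \<ge> \<bar>r\<bar>"
proof -
  have r1: "ess_equiv (Tm x y z) (Tm y z x)" by (rule ee_rot)
  have r2: "ess_equiv (Tm x y z) (Tm z x y)" by (rule ee_trans[OF ee_rot ee_rot])
  have s0: "ess_equiv (Tm x y z) (Tm x z y)" by (rule ee_swap)
  have s1: "ess_equiv (Tm x y z) (Tm y x z)" by (rule ee_trans[OF r1 ee_swap])
  have s2: "ess_equiv (Tm x y z) (Tm z y x)" by (rule ee_trans[OF r2 ee_swap])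
  consider "\<bar>x\<bar> \<ge> \<bar>y\<bar> \<and> \<bar>y\<bar> \<ge> \<bar>z\<bar>" | "\<bar>y\<bar> \<ge> \<bar>z\<bar> \<and> \<bar>z\<bar> \<ge> \<bar>x\<bar>" | "\<bar>z\<bar> \<ge> \<bar>x\<bar> \<and> \<bar>x\<bar> \<ge> \<bar>y\<bar>"
    | "\<bar>x\<bar> \<ge> \<bar>z\<bar> \<and> \<bar>z\<bar> \<ge> \<bar>y\<bar>" | "\<bar>y\<bar> \<ge> \<bar>x\<bar> \<and> \<bar>x\<bar> \<ge> \<bar>z\<bar>" | "\<bar>z\<bar> \<ge> \<bar>y\<bar> \<and> \<bar>y\<bar> \<ge> \<bar>x\<bar>"
    by linarith
  then show ?thesis
  proof cases
    case 1 then show ?thesis using ee_refl by blast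
  next
    case 2 then show ?thesis using r1 by blast
  next
    case 3 then show ?thesis using r2 by blast
  next
    case 4 then show ?thesis using s0 by blast
  next
    case 5 then show ?thesis using s1 by blast
  next
    case 6 then show ?thesis using s2 by blast
  qed
qed

lemma sort_exists: "\<exists>p q r. ess_equiv (Tm x y z) (Tm p q r) \<and> \<bar>p\<bar> \<ge> \<bar>q\<bar> \<and> \<bar>q\<bar> \<ge> \<bar>r\<bar> \<and> r \<ge> 0"
proof -
  obtain p q r where h: "ess_equiv (Tm x y z) (Tm p q r)" "\<bar>p\<bar> \<ge> \<bar>q\<bar>" "\<bar>q\<bar> \<ge> \<bar>r\<bar>"
    using sort_exists0 by blast
  show ?thesis
  proof (cases "r \<ge> 0")
    case True then show ?thesis using h by blast
  next
    case False
    have "ess_equiv (Tm x y z) (Tm (-p) (-q) (-r))" by (rule ee_trans[OF h(1) ee_neg])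
    then show ?thesis using h False by (intro exI[of _ "-p"] exI[of _ "-q"] exI[of _ "-r"]) auto
  qed
qed

lemma form_Tm: "form t a b c = (if t = 0 then Tm a b c else if t = 1 then Tm a (-b) c
    else if t = 2 then Tm (-a) b c else Tm (-a) (-b) c)"
  by (induction t a b c rule: form.induct) (simp_all add: Tm_def)

lemma has_form_ex: "\<exists>t<4. has_form (Tm x y z) t"
proof -
  obtain p q r where h: "ess_equiv (Tm x y z) (Tm p q r)" "\<bar>p\<bar> \<ge> \<bar>q\<bar>" "\<bar>q\<bar> \<ge> \<bar>r\<bar>" "r \<ge> 0"
    using sort_exists by blast
  have hf: "has_form (Tm x y z) t" if "Tm p q r = form t \<bar>p\<bar> \<bar>q\<bar> r" for t
    unfolding has_form_def using h that by (intro exI[of _ "\<bar>p\<bar>"] exI[of _ "\<bar>q\<bar>"] exI[of _ r]) auto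
  consider "p \<ge> 0" "q \<ge> 0" | "p \<ge> 0" "q < 0" | "p < 0" "q \<ge> 0" | "p < 0" "q < 0" by linarith
  then show ?thesis
  proof cases
    case 1 then have "has_form (Tm x y z) 0" using h by (intro hf) (simp add: form_Tm)
    then show ?thesis by (intro exI[of _ 0]) simp
  next
    case 2 then have "has_form (Tm x y z) 1" using h by (intro hf) (simp add: form_Tm)
    then show ?thesis by (intro exI[of _ 1]) simp
  next
    case 3 then have "has_form (Tm x y z) 2" using h by (intro hf) (simp add: form_Tm)
    then show ?thesis by (intro exI[of _ 2]) simp
  next
    case 4 then have "has_form (Tm x y z) 3" using h by (intro hf) (simp add: form_Tm)
    then show ?thesis by (intro exI[of _ 3]) simp
  qed
qed

lemma std_form_props: assumes "skew3 A"
  shows "\<exists>t a b c. a \<ge> b \<and> b \<ge> c \<and> c \<ge> 0 \<and> std_form A = form t a b c \<and> ess_equiv A (std_form A)"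
proof -
  have A: "A = Tm (A 1 2) (A 2 3) (A 3 1)" by (rule skew_Tm[OF assms])
  have ex: "\<exists>t. has_form A t" using has_form_ex A by metis
  define t0 where "t0 = (LEAST t. has_form A t)"
  have h0: "has_form A t0" unfolding t0_def by (rule LeastI_ex[OF ex])
  have lt: "t0 < 4"
  proof -
    obtain t where "t < 4" "has_form A t" using has_form_ex A by metis
    then have "t0 \<le> t" unfolding t0_def by (simp add: Least_le)
    then show ?thesis using \<open>t < 4\<close> by simp
  qed
  have mn: "\<forall>t'<t0. \<not> has_form A t'" unfolding t0_def using not_less_Least by blast
  obtain a b c where abc: "a \<ge> b" "b \<ge> c" "c \<ge> 0" "ess_equiv A (form t0 a b c)"
    using h0 unfolding has_form_def by blast
  let ?P = "\<lambda>M. \<exists>t a b c. t < 4 \<and> a \<ge> b \<and> b \<ge> c \<and> c \<ge> 0 \<and>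
       M = form t a b c \<and> ess_equiv A M \<and> (\<forall>t'<t. \<not> has_form A t')"
  have "?P (form t0 a b c)" using abc lt mn by blast
  then have ex: "\<exists>M. ?P M" by blast
  have "?P (std_form A)" unfolding std_form_def by (rule someI_ex[of ?P, OF ex])
  then show ?thesis by blast
qed

lemma perm3: assumes "bij_betw \<sigma> idx3 idx3"
  shows "(\<sigma> 1, \<sigma> 2, \<sigma> 3) \<in> {(1,2,3),(1,3,2),(2,1,3),(2,3,1),(3,1,2),(3,2,1)}"
proof -
  have m: "\<sigma> 1 \<in> {1,2,3}" "\<sigma> 2 \<in> {1,2,3}" "\<sigma> 3 \<in> {1,2,3}"
    using bij_betw_apply[OF assms] by (auto simp: idx3_def)
  have i: "inj_on \<sigma> idx3" using assms bij_betw_imp_inj_on by blast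
  have d: "\<sigma> 1 \<noteq> \<sigma> 2" "\<sigma> 2 \<noteq> \<sigma> 3" "\<sigma> 1 \<noteq> \<sigma> 3"
    using inj_onD[OF i] by (fastforce simp: idx3_def)+
  show ?thesis using m d by auto
qed

lemma good3_perm: "good3 x y z = good3 y z x" "good3 x y z = good3 z x y" "good3 x y z = good3 x z y"
  "good3 x y z = good3 y x z" "good3 x y z = good3 z y x"
  using good3_rot good3_swap by metis+

lemma EI: assumes "ess_equiv (Tm x y z) (Tm p q r)" shows "good3 x y z = good3 p q r"
proof -
  obtain \<sigma> where b: "bij_betw \<sigma> idx3 idx3" and h: "(\<forall>i\<in>idx3. \<forall>j\<in>idx3. Tm p q r i j = Tm x y z (\<sigma> i) (\<sigma> j)) \<or>
       (\<forall>i\<in>idx3. \<forall>j\<in>idx3. Tm p q r i j = - Tm x y z (\<sigma> i) (\<sigma> j))" using assms unfolding ess_equiv_def by blast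
  have I: "1 \<in> idx3" "2 \<in> idx3" "3 \<in> idx3" by (auto simp: idx3_def)
  obtain e :: int where e: "e = 1 \<or> e = -1" "p = e * Tm x y z (\<sigma> 1) (\<sigma> 2)"
     "q = e * Tm x y z (\<sigma> 2) (\<sigma> 3)" "r = e * Tm x y z (\<sigma> 3) (\<sigma> 1)"
  proof (cases "\<forall>i\<in>idx3. \<forall>j\<in>idx3. Tm p q r i j = Tm x y z (\<sigma> i) (\<sigma> j)")
    case True then show ?thesis using that[of 1] I by force
  next
    case False then have "\<forall>i\<in>idx3. \<forall>j\<in>idx3. Tm p q r i j = - Tm x y z (\<sigma> i) (\<sigma> j)" using h by blast
    then show ?thesis using that[of "-1"] I by force
  qed
  have P: "(\<sigma> 1, \<sigma> 2, \<sigma> 3) \<in> {(1,2,3),(1,3,2),(2,1,3),(2,3,1),(3,1,2),(3,2,1)}" by (rule perm3[OF b])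
  from e(1) show ?thesis
  proof
    assume "e = 1" then show ?thesis using P e(2-4) good3_perm good3_neg by auto
  next
    assume "e = -1" then show ?thesis using P e(2-4) good3_perm good3_neg by auto
  qed
qed




lemma S_Tm: "S (-d) (-e) f = Tm d e f" by (simp add: Tm_def)

lemma good_pos: "d \<ge> 2 \<Longrightarrow> e \<ge> 2 \<Longrightarrow> f \<ge> 2 \<Longrightarrow> Cf d e f \<le> 4 \<Longrightarrow> good3 d e f"
  by (simp add: good3_def cyc3_def)

lemma good_back3: assumes "good3 (x - sgn z * max (y*z) 0) (-y) (-z)" shows "good3 x y z"
proof -
  have "good3 ((x - sgn z * max (y*z) 0) - sgn (-z) * max ((-y)*(-z)) 0) (-(-y)) (-(-z))"
    by (rule good_mu3[OF assms])
  then show ?thesis by (simp add: sgn_minus)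
qed

lemma step2_sound: "step2_passes M \<Longrightarrow> skew3 M \<Longrightarrow> good3 (M 1 2) (M 2 3) (M 3 1)"
proof (induction rule: step2_passes.induct)
  case (1 d e f M)
  have gd: "good3 d e f"
  proof -
    consider "f \<ge> 3 \<and> e * f - d \<ge> e" | "f = 2 \<and> d = e" | "f \<ge> 3 \<and> e * f - d < e \<and> good3 d e f"
      using 1(5) skew3_Tm by (auto simp: S_Tm)
    then show ?thesis
    proof cases
      case 1
      then have "Cf d e f \<le> 4" using A3[of e d f] \<open>d \<ge> e\<close> \<open>e \<ge> f\<close> by simp
      then show ?thesis using 1 \<open>d \<ge> e\<close> \<open>e \<ge> f\<close> by (intro good_pos) auto
    next
      case 2
      then have "Cf d e f \<le> 4" by (simp add: Cf_def)
      then show ?thesis using 2 \<open>d \<ge> e\<close> \<open>e \<ge> f\<close> by (intro good_pos) auto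
    next
      case 3 then show ?thesis by simp
    qed
  qed
  have Mt: "M = Tm (M 1 2) (M 2 3) (M 3 1)" by (rule skew_Tm[OF 1(6)])
  have "ess_equiv (Tm (M 1 2 - sgn (M 3 1) * max (M 2 3 * M 3 1) 0) (- M 2 3) (- M 3 1)) (Tm d e f)"
    using 1(4) Mt mu3_Tm by (metis S_Tm)
  then have "good3 (M 1 2 - sgn (M 3 1) * max (M 2 3 * M 3 1) 0) (- M 2 3) (- M 3 1)" using EI gd by blast
  then show ?case by (rule good_back3)
qed

lemma Cf_2: "Cf d e 2 = (d-e)*(d-e) + 4" by (simp add: Cf_def algebra_simps)

lemma step2_from:
  assumes "d \<ge> e" "e \<ge> f" "f \<ge> 2" "ess_equiv (mu 3 M) (Tm d e f)" "Cf d e f \<le> 4"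
    and IH: "f \<ge> 3 \<Longrightarrow> e*f - d < e \<Longrightarrow> step2_passes (Tm d e f)"
  shows "step2_passes M"
proof (rule step2_passes.intros[of e d f])
  show "e \<le> d" "f \<le> e" "2 \<le> f" using assms by auto
  show "ess_equiv (mu 3 M) (S (- d) (- e) f)" using assms(4) by (simp add: S_Tm)
  show "3 \<le> f \<and> e \<le> e * f - d \<or> f = 2 \<and> d = e \<or> 3 \<le> f \<and> e * f - d < e \<and> step2_passes (S (- d) (- e) f)"
  proof (cases "f = 2")
    case True
    then have "(d-e)*(d-e) \<le> 0" using assms(5) Cf_2 by simp
    then have "d = e" by (metis mult_le_0_iff order_antisym_conv right_minus_eq zero_le_mult_iff)
    then show ?thesis using True by simp
  next
    case False
    then have "f \<ge> 3" using assms by simp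
    then show ?thesis using IH by (auto simp: S_Tm)
  qed
qed

lemma step2_complete: "a \<ge> b \<Longrightarrow> b \<ge> c \<Longrightarrow> c \<ge> 2 \<Longrightarrow> Cf a b c \<le> 4 \<Longrightarrow> b*c - a < b \<Longrightarrow> step2_passes (Tm a b c)"
proof (induction "nat (a+b+c)" arbitrary: a b c rule: less_induct)
  case less
  define a' where "a' = b*c - a"
  have a'2: "a' \<ge> 2" using A1[of a b c] less.prems unfolding a'_def by simp
  have a'b: "a' < b" using less.prems a'_def by simp
  have bc: "b*c > 0" using less.prems by simp
  have m: "mu 3 (Tm a b c) = Tm (-a') (-b) (-c)" using mu3_Tm[of a b c] bc less.prems by (simp add: a'_def)
  have e1: "ess_equiv (mu 3 (Tm a b c)) (Tm b c a')"
    unfolding m by (rule ee_trans[OF ee_neg]) (simp add: ee_rot)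
  have Cf': "Cf a' b c \<le> 4" using Cf_flip[of b c a] less.prems a'_def by simp
  have IH: "step2_passes (Tm d e f)" if "d \<ge> e" "e \<ge> f" "f \<ge> 2" "Cf d e f \<le> 4" "e*f - d < e"
     "d + e + f < a + b + c" for d e f
    using less.hyps[of d e f] that by simp
  show ?case
  proof (cases "a' \<ge> c")
    case True
    have ee: "ess_equiv (mu 3 (Tm a b c)) (Tm b a' c)" by (rule ee_trans[OF e1 ee_swap])
    have C: "Cf b a' c \<le> 4" using Cf' Cf_rot Cf_swap by metis
    show ?thesis
      by (rule step2_from[OF _ _ _ ee C]) (use a'b a'2 True less.prems IH C in auto)
  next
    case False
    have C: "Cf b c a' \<le> 4" using Cf' Cf_rot by metis
    show ?thesis
      by (rule step2_from[OF _ _ _ e1 C]) (use a'b a'2 False less.prems IH C in auto)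
  qed
qed


lemma passes_good: assumes "skew3 A" shows "passes A \<longleftrightarrow> good3 (A 1 2) (A 2 3) (A 3 1)"
proof -
  obtain t a b c where abc: "a \<ge> b" "b \<ge> c" "c \<ge> 0" and M: "std_form A = form t a b c"
    and ee: "ess_equiv A (std_form A)" using std_form_props[OF assms] by blast
  define p where "p = std_form A 1 2"
  define q where "q = std_form A 2 3"
  define r where "r = std_form A 3 1"
  have Mt: "std_form A = Tm p q r" unfolding p_def q_def r_def M
    by (rule skew_Tm) (simp add: form_Tm skew3_Tm)
  have At: "A = Tm (A 1 2) (A 2 3) (A 3 1)" by (rule skew_Tm[OF assms])
  have EQ: "good3 (A 1 2) (A 2 3) (A 3 1) = good3 p q r" using EI ee Mt At by metis
  have F0: "p \<ge> q \<and> q \<ge> r \<and> r > 0" if "cyc3 p q r"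
    using that abc M unfolding p_def q_def r_def by (auto simp: form_Tm cyc3_def split: if_splits)
  have P: "passes A \<longleftrightarrow> (p\<ge>q \<and> q\<ge>r \<and> r\<ge>2 \<and> q*r - p \<ge> q) \<or> (cyc3 p q r \<and> \<not> r \<le> 2 \<and> step2_passes (Tm p q r))"
    unfolding passes_def Let_def Mt Tm_simps nosc_Tm ..
  have "passes A \<longleftrightarrow> good3 p q r"
  proof
    assume "passes A"
    then consider "p\<ge>q \<and> q\<ge>r \<and> r\<ge>2 \<and> q*r - p \<ge> q" | "step2_passes (Tm p q r)" using P by blast
    then show "good3 p q r"
    proof cases
      case 1
      then have "Cf p q r \<le> 4" using A3[of q p r] by simp
      then show ?thesis using 1 by (intro good_pos) auto
    next
      case 2
      then show ?thesis using step2_sound[OF 2 skew3_Tm] by simp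
    qed
  next
    assume g: "good3 p q r"
    then have cy: "cyc3 p q r" by (simp add: good3_def)
    from F0[OF cy] have o: "p \<ge> q" "q \<ge> r" "r > 0" by auto
    then have g2: "r \<ge> 2" "Cf p q r \<le> 4" using g by (auto simp: good3_def)
    show "passes A"
    proof (cases "q*r - p \<ge> q")
      case True then show ?thesis using P o g2 by simp
    next
      case False
      have r2: "\<not> r \<le> 2"
      proof
        assume "r \<le> 2" then have "r = 2" using g2 by simp
        then have "(p-q)*(p-q) \<le> 0" using g2 Cf_2[of p q] by simp
        then have "p = q" by (metis mult_le_0_iff order_antisym_conv right_minus_eq)
        then show False using False \<open>r = 2\<close> by simp
      qed
      have "step2_passes (Tm p q r)" using step2_complete[of q p r] o g2 False by simp
      then show ?thesis using P cy r2 by simp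
    qed
  qed
  then show ?thesis using EQ by simp
qed

theorem mainTheorem8:
  fixes A :: mat3
  assumes "skew3 A"
  shows "passes A \<longleftrightarrow> mutation_cyclic A"
proof -
  have At: "A = Tm (A 1 2) (A 2 3) (A 3 1)" by (rule skew_Tm[OF assms])
  have "mutation_cyclic A \<longleftrightarrow> good3 (A 1 2) (A 2 3) (A 3 1)" using mc_iff At by metis
  then show ?thesis using passes_good[OF assms] by simp
qed

end
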